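(* Let $h\ge 2$ and let $D$ be a set of positive integers. Suppose there exist an integer $t$ with $2\le t\le 2h-1$ and positive integers $f_1,\dots,f_t$ with $f_1+\dots+f_t\le 2h$ such that $\sup_{m\ge 1} R_{f_1,\dots,f_t,D}(m)=\infty$. Then there exist an integer $t'$ with $2\le t'\le 2h-1$ and positive integers $f'_1,\dots,f'_{t'}$ with $f'_1+\dots+f'_{t'}\le 2h$ such that $\sup_{m\ge 1} R^{\mathrm{Dist}}_{f'_1,\dots,f'_{t'},D}(m)=\infty$.
   Context: For positive integers $f_1,\dots,f_t$, a set $D$ of positive integers and a positive integer $m$, $R_{f_1,\dots,f_t,D}(m)$ is the number of $t$-tuples $(d_1,\dots,d_t)$ of pairwise distinct elements of $D$ with $f_1d_1+\dots+f_td_t=m$, and $R^{\mathrm{Dist}}_{f_1,\dots,f_t,D}(m)$ is the largest integer $q\ge0$ such that there exist $qt$ pairwise distinct elements $d_1,\dots,d_{qt}\in D$ with $f_1d_{jt+1}+\dots+f_td_{jt+t}=m$ for every $0\le j\le q-1$. *)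

theory Defs
  imports Main "HOL-Library.Extended_Nat"
begin

text \<open>Coefficients f_1..f_t are the list f (t = length f); the tuple (d_1..d_t) is a list ds.\<close>

definition R :: "nat list \<Rightarrow> nat set \<Rightarrow> nat \<Rightarrow> nat" where
  "R f D m = card {ds. length ds = length f \<and> distinct ds \<and> set ds \<subseteq> D \<and>
      (\<Sum>i<length f. f ! i * ds ! i) = m}"

definition RDist :: "nat list \<Rightarrow> nat set \<Rightarrow> nat \<Rightarrow> nat" where
  "RDist f D m = (GREATEST q. \<exists>ds. length ds = q * length f \<and> distinct ds \<and> set ds \<subseteq> D \<and>
      (\<forall>j<q. (\<Sum>i<length f. f ! i * ds ! (j * length f + i)) = m))"

end

theory Submission
  imports Defs
begin

definition S :: "nat list \<Rightarrow> nat set \<Rightarrow> nat \<Rightarrow> nat list set" where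
  "S f D m = {ds. length ds = length f \<and> distinct ds \<and> set ds \<subseteq> D \<and>
      (\<Sum>i<length f. f ! i * ds ! i) = m}"

lemma R_S: "R f D m = card (S f D m)" by (simp add: R_def S_def)

definition del :: "nat \<Rightarrow> 'a list \<Rightarrow> 'a list" where
  "del i xs = take i xs @ drop (Suc i) xs"

lemma ws_zip: "length (ds::nat list) = length (f::nat list) \<Longrightarrow> length ds = length f \<Longrightarrow>
  (\<Sum>k<length f. f!k * ds!k) = sum_list (map (\<lambda>(a,b). a*b) (zip f ds))"
  by (simp add: sum_list_sum_nth atLeast0LessThan)

lemma sum_list_del: "i < length xs \<Longrightarrow> sum_list (del i xs) + xs ! i = sum_list (xs::nat list)"
proof -
  assume "i < length xs"
  then have "xs = take i xs @ xs!i # drop (Suc i) xs" by (rule id_take_nth_drop)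
  then have "sum_list xs = sum_list (take i xs @ xs!i # drop (Suc i) xs)" by simp
  then show ?thesis by (simp add: del_def)
qed

lemma ws_del:
  fixes f ds :: "nat list"
  assumes "length ds = length f" "i < length f"
  shows "(\<Sum>k<length f. f!k * ds!k) = f!i * ds!i + (\<Sum>k<length (del i f). del i f ! k * del i ds ! k)"
proof -
  have l: "length (del i ds) = length (del i f)" using assms by (simp add: del_def)
  have z: "zip (del i f) (del i ds) = del i (zip f ds)"
    using assms by (simp add: del_def zip_append take_zip drop_zip)
  have "sum_list (map (\<lambda>(a,b). a*b) (del i (zip f ds))) + (\<lambda>(a,b). a*b) (zip f ds ! i)
      = sum_list (map (\<lambda>(a,b). a*b) (zip f ds))"
    using sum_list_del[of i "map (\<lambda>(a,b). a*b) (zip f ds)"] assms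
    by (simp add: del_def take_map drop_map)
  moreover have "(\<Sum>k<length (del i f). del i f ! k * del i ds ! k) = sum_list (map (\<lambda>(a,b). a*b) (zip (del i f) (del i ds)))"
    using ws_zip l by blast
  moreover have "(\<Sum>k<length f. f!k * ds!k) = sum_list (map (\<lambda>(a,b). a*b) (zip f ds))"
    using ws_zip assms(1) by blast
  ultimately show ?thesis using assms z by (simp add: add.commute)
qed

lemma del_props:
  assumes "distinct ds" "i < length ds"
  shows "distinct (del i ds)" "set (del i ds) \<subseteq> set ds" "length (del i ds) = length ds - 1"
proof -
  have e: "ds = take i ds @ ds!i # drop (Suc i) ds" using assms by (simp add: id_take_nth_drop)
  have "distinct (take i ds @ ds!i # drop (Suc i) ds)" using assms(1) e by metis
  then show "distinct (del i ds)" unfolding del_def by auto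
  show "set (del i ds) \<subseteq> set ds" unfolding del_def
    by (metis Un_subset_iff set_append set_drop_subset set_take_subset)
  show "length (del i ds) = length ds - 1" using assms by (simp add: del_def)
qed

lemma del_inj:
  assumes "i < length a" "i < length b" "a ! i = b ! i" "del i a = del i b" "length a = length b"
  shows "a = b"
proof -
  have "take i a = take i b" "drop (Suc i) a = drop (Suc i) b" using assms unfolding del_def
    by (simp_all add: append_eq_append_conv)
  then show ?thesis using assms by (metis id_take_nth_drop)
qed

lemma S_bound:
  assumes pos: "\<forall>x\<in>set f. x > 0" and "ds \<in> S f D m"
  shows "set ds \<subseteq> {..m}"
proof
  fix x assume "x \<in> set ds"
  then obtain k where k: "k < length ds" "ds ! k = x" by (auto simp: in_set_conv_nth)
  have len: "length ds = length f" using assms by (simp add: S_def)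
  have "f ! k > 0" using pos k len by auto
  then have "x \<le> f!k * ds!k" using k by simp
  also have "\<dots> \<le> (\<Sum>i<length f. f ! i * ds ! i)"
    using k len by (intro member_le_sum) auto
  finally show "x \<in> {..m}" using assms by (simp add: S_def)
qed

lemma S_finite:
  assumes pos: "\<forall>x\<in>set f. x > 0"
  shows "finite (S f D m)"
proof -
  have "S f D m \<subseteq> {xs. set xs \<subseteq> {..m} \<and> length xs = length f}"
    using S_bound[OF pos] by (auto simp: S_def)
  then show ?thesis by (rule finite_subset) (simp add: finite_lists_length_eq)
qed

lemma S_zero:
  assumes pos: "\<forall>x\<in>set f. x > 0" and Dp: "\<forall>d\<in>D. d > 0" and "f \<noteq> []"
  shows "S f D 0 = {}"
proof (rule ccontr)
  assume "S f D 0 \<noteq> {}"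
  then obtain ds where ds: "ds \<in> S f D 0" by auto
  have len: "length ds = length f" using ds by (simp add: S_def)
  have "ds ! 0 \<in> D" using ds len assms(3) by (auto simp: S_def)
  then have "ds ! 0 > 0" using Dp by auto
  moreover have "f ! 0 > 0" using pos assms(3) by auto
  ultimately have "0 < f!0 * ds!0" by simp
  also have "\<dots> \<le> (\<Sum>i<length f. f ! i * ds ! i)"
    using assms(3) by (intro member_le_sum) auto
  moreover have "(\<Sum>i<length f. f ! i * ds ! i) = 0" using ds unfolding S_def by blast
  ultimately show False by linarith
qed

lemma S_small:
  assumes pos: "\<forall>x\<in>set f. x > 0" and "length f \<le> 1"
  shows "card (S f D m) \<le> 1"
proof -
  have "\<forall>a\<in>S f D m. \<forall>b\<in>S f D m. a = b"
  proof (intro ballI)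
    fix a b assume a: "a \<in> S f D m" and b: "b \<in> S f D m"
    show "a = b"
    proof (cases "length f = 0")
      case True then show ?thesis using a b by (simp add: S_def)
    next
      case False
      then have l1: "length f = 1" using assms by linarith
      then have "length a = 1" "length b = 1" using a b by (auto simp: S_def)
      moreover have "f!0 * a!0 = m" "f!0 * b!0 = m" using a b l1 by (auto simp: S_def)
      moreover have "f!0 > 0" using pos l1 by auto
      ultimately show ?thesis
        by (metis One_nat_def length_0_conv length_Suc_conv mult_left_cancel not_gr0 nth_Cons_0)
    qed
  qed
  then show ?thesis by (simp add: card_le_Suc0_iff_eq S_finite[OF pos])
qed

lemma set_del: "set (del i xs) \<subseteq> set xs"
  unfolding del_def by (metis Un_subset_iff set_append set_drop_subset set_take_subset)

definition fam :: "nat list \<Rightarrow> nat set \<Rightarrow> nat \<Rightarrow> nat list list \<Rightarrow> bool" where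
  "fam f D m F = (distinct F \<and> set F \<subseteq> S f D m \<and>
     (\<forall>a\<in>set F. \<forall>b\<in>set F. a \<noteq> b \<longrightarrow> set a \<inter> set b = {}))"

lemma concat_nth_block:
  "\<forall>x\<in>set F. length x = t \<Longrightarrow> j < length F \<Longrightarrow> i < t \<Longrightarrow> concat F ! (j*t+i) = F!j!i"
proof (induction F arbitrary: j)
  case Nil then show ?case by simp
next
  case (Cons x F)
  show ?case
  proof (cases j)
    case 0 then show ?thesis using Cons by (simp add: nth_append)
  next
    case (Suc j')
    then have "concat (x#F) ! (j*t+i) = concat F ! (j'*t+i)" using Cons by (simp add: nth_append)
    then show ?thesis using Cons Suc by simp
  qed
qed

lemma length_concat_block: "\<forall>x\<in>set F. length x = t \<Longrightarrow> length (concat F) = length F * t"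
  by (induction F) auto

lemma RDist_bound:
  assumes pos: "\<forall>x\<in>set f. x > 0" and ne: "f \<noteq> []"
    and P: "\<exists>ds. length ds = q * length f \<and> distinct ds \<and> set ds \<subseteq> D \<and>
      (\<forall>j<q. (\<Sum>i<length f. f ! i * ds ! (j * length f + i)) = m)"
  shows "q \<le> m + 1"
proof -
  obtain ds where ds: "length ds = q * length f" "distinct ds" "set ds \<subseteq> D"
    "\<forall>j<q. (\<Sum>i<length f. f ! i * ds ! (j * length f + i)) = m" using P by blast
  let ?t = "length f"
  have tp: "?t > 0" using ne by simp
  have "set ds \<subseteq> {..m}"
  proof
    fix x assume "x \<in> set ds"
    then obtain k where k: "k < length ds" "ds ! k = x" by (auto simp: in_set_conv_nth)
    define j where "j = k div ?t"
    define i where "i = k mod ?t"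
    have ki: "k = j * ?t + i" unfolding j_def i_def by simp
    have it: "i < ?t" unfolding i_def using tp by simp
    have jq: "j < q" unfolding j_def using k ds(1) tp
      by (simp add: less_mult_imp_div_less)
    have "f ! i > 0" using pos it by auto
    then have "x \<le> f!i * ds!(j * ?t + i)" using k ki by simp
    also have "\<dots> \<le> (\<Sum>i<?t. f ! i * ds ! (j * ?t + i))"
      using it by (intro member_le_sum[where f="\<lambda>i. f ! i * ds ! (j * ?t + i)"]) auto
    finally show "x \<in> {..m}" using ds(4) jq by simp
  qed
  then have "card (set ds) \<le> card {..m}" by (intro card_mono) auto
  then have "card (set ds) \<le> m + 1" by simp
  then have "q * ?t \<le> m + 1" using ds by (simp add: distinct_card)
  moreover have "q \<le> q * ?t" using tp by (simp add: Suc_leI)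
  ultimately show ?thesis by linarith
qed

lemma fam_RDist:
  assumes pos: "\<forall>x\<in>set f. x > 0" and ne: "f \<noteq> []" and F: "fam f D m F"
  shows "length F \<le> RDist f D m"
  unfolding RDist_def
proof (rule Greatest_le_nat[where b="m+1"])
  let ?t = "length f"
  have lens: "\<forall>x\<in>set F. length x = ?t" using F by (auto simp: fam_def S_def)
  show "\<exists>ds. length ds = length F * ?t \<and> distinct ds \<and> set ds \<subseteq> D \<and>
      (\<forall>j<length F. (\<Sum>i<?t. f ! i * ds ! (j * ?t + i)) = m)"
  proof (intro exI conjI allI impI)
    show "length (concat F) = length F * ?t" using lens by (rule length_concat_block)
    show "distinct (concat F)" using F by (intro distinct_concat) (auto simp: fam_def S_def)
    show "set (concat F) \<subseteq> D" using F by (auto simp: fam_def S_def)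
    fix j assume j: "j < length F"
    have "(\<Sum>i<?t. f ! i * concat F ! (j * ?t + i)) = (\<Sum>i<?t. f ! i * F ! j ! i)"
      using concat_nth_block[OF lens j] by simp
    also have "\<dots> = m" using F nth_mem[OF j] unfolding fam_def S_def by blast
    finally show "(\<Sum>i<?t. f ! i * concat F ! (j * ?t + i)) = m" .
  qed
  fix y assume "\<exists>ds. length ds = y * ?t \<and> distinct ds \<and> set ds \<subseteq> D \<and>
      (\<forall>j<y. (\<Sum>i<?t. f ! i * ds ! (j * ?t + i)) = m)"
  then show "y \<le> m + 1" using RDist_bound[OF pos ne] by blast
qed

lemma T_card:
  assumes pos: "\<forall>x\<in>set f. x > 0" and Dp: "\<forall>d\<in>D. d > 0" and n: "length f \<ge> 2"
    and i: "i < length f"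
    and hyp: "\<forall>m'\<ge>1. R (del i f) D m' < N"
  shows "card {s\<in>S f D m. s ! i = d} \<le> N"
proof (cases "{s\<in>S f D m. s ! i = d} = {}")
  case emp: True
  have "card {s\<in>S f D m. s ! i = d} = 0" by (simp only: emp card.empty)
  then show ?thesis by simp
next
  case False
  then obtain s0 where s0: "s0 \<in> S f D m" "s0 ! i = d" by auto
  let ?g = "del i f"
  let ?m' = "m - f!i*d"
  have pos': "\<forall>x\<in>set ?g. x > 0" using pos set_del[of i f] by blast
  have gne: "?g \<noteq> []" using n i by (auto simp add: del_def)
  have img: "del i s \<in> S ?g D ?m'" if s: "s \<in> S f D m" "s ! i = d" for s
  proof -
    have len: "length s = length f" using s by (simp add: S_def)
    have ws: "(\<Sum>k<length f. f!k * s!k) = m" using s by (simp add: S_def)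
    have "length (del i s) = length ?g" using len i by (simp add: del_def)
    moreover have "distinct (del i s)" using del_props(1)[of s i] s len i by (simp add: S_def)
    moreover have "set (del i s) \<subseteq> D" using set_del[of i s] s by (auto simp: S_def)
    moreover have "(\<Sum>k<length ?g. ?g ! k * del i s ! k) = ?m'"
      using ws_del[OF len i] ws s(2) by simp
    ultimately show ?thesis by (simp add: S_def)
  qed
  have "?m' \<noteq> 0" using img[OF s0] S_zero[OF pos' Dp gne] by auto
  then have lt: "R ?g D ?m' < N" using hyp by simp
  have "card {s\<in>S f D m. s ! i = d} \<le> card (S ?g D ?m')"
  proof (rule card_inj_on_le[where f="del i"])
    show "inj_on (del i) {s \<in> S f D m. s ! i = d}"
    proof (rule inj_onI)
      fix a b assume a: "a \<in> {s \<in> S f D m. s ! i = d}" and b: "b \<in> {s \<in> S f D m. s ! i = d}"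
        and ab: "del i a = del i b"
      have "length a = length f" "length b = length f" using a b by (auto simp: S_def)
      then show "a = b" using del_inj[of i a b] a b ab i by auto
    qed
    show "del i ` {s \<in> S f D m. s ! i = d} \<subseteq> S ?g D ?m'" using img by auto
    show "finite (S ?g D ?m')" using S_finite[OF pos'] .
  qed
  moreover have "R ?g D ?m' = card (S ?g D ?m')" by (rule R_S)
  ultimately show ?thesis using lt by linarith
qed

lemma cover:
  assumes pos: "\<forall>x\<in>set f. x > 0" and Dp: "\<forall>d\<in>D. d > 0" and n: "length f \<ge> 2"
    and q0: "\<forall>m\<ge>1. RDist f D m < q0"
    and m1: "m \<ge> 1"
    and m: "length f * (q0 * length f) * N < R f D m"
    and hyp: "\<forall>i<length f. \<forall>m'\<ge>1. R (del i f) D m' < N"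
  shows False
proof -
  let ?t = "length f"
  have ne: "f \<noteq> []" using n by auto
  define P where "P k = (\<exists>F. fam f D m F \<and> length F = k)" for k
  have P0: "P 0" unfolding P_def fam_def by (intro exI[of _ "[]"]) simp
  have Pb: "y \<le> q0" if Py: "P y" for y
  proof -
    obtain F where F: "fam f D m F" "length F = y" using Py unfolding P_def by blast
    have "length F \<le> RDist f D m" using F(1) by (rule fam_RDist[OF pos ne])
    then have "y \<le> RDist f D m" using F(2) by simp
    then show ?thesis using q0 m1 by (meson less_imp_le_nat order_trans)
  qed
  define K where "K = Greatest P"
  have PK: "P K" unfolding K_def using P0 Pb by (rule GreatestI_nat)
  then obtain F where F: "fam f D m F" "length F = K" unfolding P_def by blast
  define U where "U = (\<Union>x\<in>set F. set x)"
  have lens: "\<forall>x\<in>set F. length x = ?t" using F by (auto simp: fam_def S_def)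
  have finU: "finite U" unfolding U_def by simp
  have "card U \<le> (\<Sum>x\<in>set F. card (set x))" unfolding U_def by (rule card_UN_le) simp
  also have "\<dots> \<le> (\<Sum>x\<in>set F. ?t)" by (intro sum_mono) (metis card_length lens)
  also have "\<dots> = card (set F) * ?t" by simp
  also have "\<dots> \<le> q0 * ?t" using F Pb[OF PK] by (simp add: distinct_card fam_def)
  finally have cU: "card U \<le> q0 * ?t" .
  have meet: "\<exists>i<?t. s ! i \<in> U" if s: "s \<in> S f D m" for s
  proof (rule ccontr)
    assume nm: "\<not> (\<exists>i<?t. s ! i \<in> U)"
    have ls: "length s = ?t" using s by (simp add: S_def)
    then have disj: "set s \<inter> U = {}" using nm by (auto simp: in_set_conv_nth)
    have "s \<noteq> []" using ls ne by auto
    then have "s \<notin> set F"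
    proof (intro notI)
      assume sne: "s \<noteq> []" and sF: "s \<in> set F"
      have "set s \<subseteq> U" unfolding U_def using sF by (rule UN_upper)
      with disj have "set s = {}" by (simp add: Int_absorb2)
      with sne show False by simp
    qed
    then have "fam f D m (s # F)" using F s disj unfolding fam_def U_def by auto
    then have "P (Suc K)" unfolding P_def using F by (intro exI[of _ "s#F"]) simp
    then have "Suc K \<le> Greatest P" using Pb by (rule Greatest_le_nat)
    then have "Suc K \<le> K" unfolding K_def .
    then show False by simp
  qed
  have sub: "S f D m \<subseteq> (\<Union>i<?t. \<Union>d\<in>U. {s\<in>S f D m. s ! i = d})" using meet by blast
  have "R f D m \<le> card (\<Union>i<?t. \<Union>d\<in>U. {s\<in>S f D m. s ! i = d})"
    unfolding R_S using sub by (intro card_mono) (simp_all add: finU S_finite[OF pos])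
  also have "\<dots> \<le> (\<Sum>i<?t. card (\<Union>d\<in>U. {s\<in>S f D m. s ! i = d}))" by (rule card_UN_le) simp
  also have "\<dots> \<le> (\<Sum>i<?t. \<Sum>d\<in>U. card {s\<in>S f D m. s ! i = d})"
    by (intro sum_mono card_UN_le finU)
  also have "\<dots> \<le> (\<Sum>i<?t. \<Sum>d\<in>U. N)"
    using T_card[OF pos Dp n] hyp by (intro sum_mono) auto
  also have "\<dots> = ?t * (card U * N)" by simp
  also have "\<dots> \<le> ?t * (q0 * ?t * N)" using cU by (intro mult_le_mono2 mult_le_mono1)
  finally show False using m by (simp add: mult.assoc)
qed

definition unb :: "(nat \<Rightarrow> nat) \<Rightarrow> bool" where "unb g = (\<forall>Q. \<exists>m\<ge>1. Q \<le> g m)"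

lemma SUP_unb: "(SUP m\<in>{1..}. enat (g m)) = \<infinity> \<longleftrightarrow> unb g"
proof
  assume h: "(SUP m\<in>{1..}. enat (g m)) = \<infinity>"
  show "unb g" unfolding unb_def
  proof
    fix Q
    have "enat Q < (top::enat)" by (simp add: top_enat_def)
    then obtain i where "i \<in> {1..}" "enat Q < enat (g i)" using h unfolding top_enat_def[symmetric] SUP_eq_top_iff by blast
    then show "\<exists>m\<ge>1. Q \<le> g m" by auto
  qed
next
  assume u: "unb g"
  show "(SUP m\<in>{1..}. enat (g m)) = \<infinity>"
    unfolding top_enat_def[symmetric] SUP_eq_top_iff
  proof (intro allI impI)
    fix x :: enat assume "x < (top::enat)"
    then obtain Q where x: "x = enat Q" by (cases x) auto
    obtain m where "m \<ge> 1" "Suc Q \<le> g m" using u unfolding unb_def by blast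
    then show "\<exists>i\<in>{1..}. x < enat (g i)" using x by (intro bexI[of _ m]) auto
  qed
qed

lemma main:
  assumes Dp: "\<forall>d\<in>D. d > 0"
  shows "(\<forall>x\<in>set f. x>0) \<Longrightarrow> unb (R f D) \<Longrightarrow> \<exists>f'. 2 \<le> length f' \<and> length f' \<le> length f \<and>
     sum_list f' \<le> sum_list f \<and> (\<forall>x\<in>set f'. x>0) \<and> unb (RDist f' D)"
proof (induction f rule: measure_induct_rule[where f=length])
  case (less f)
  show ?case
  proof (cases "length f \<le> 1")
    case True
    then have le1: "\<forall>m. R f D m \<le> 1" using S_small[OF less.prems(1)] R_S by simp
    obtain m where "2 \<le> R f D m" using less.prems(2) unfolding unb_def by blast
    then have False using le1[rule_format, of m] by linarith
    then show ?thesis ..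
  next
    case False
    then have n: "length f \<ge> 2" by simp
    show ?thesis
    proof (cases "unb (RDist f D)")
      case True then show ?thesis using n less.prems by auto
    next
      case False
      then obtain q0 where q0: "\<forall>m\<ge>1. RDist f D m < q0" unfolding unb_def by (meson not_le)
      have C: "\<exists>i<length f. \<exists>m'\<ge>1. N \<le> R (del i f) D m'" for N
      proof (rule ccontr)
        assume "\<not> (\<exists>i<length f. \<exists>m'\<ge>1. N \<le> R (del i f) D m')"
        then have hyp: "\<forall>i<length f. \<forall>m'\<ge>1. R (del i f) D m' < N" by (meson not_le)
        obtain m where m: "m \<ge> 1" "Suc (length f * (q0 * length f) * N) \<le> R f D m"
          using less.prems(2) unfolding unb_def by blast
        then have m2: "length f * (q0 * length f) * N < R f D m" by simp
        show False using cover[OF less.prems(1) Dp n q0 m(1) m2 hyp] .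
      qed
      have "\<exists>i<length f. unb (R (del i f) D)"
      proof (rule ccontr)
        assume "\<not> (\<exists>i<length f. unb (R (del i f) D))"
        then have "\<forall>i<length f. \<exists>B. \<forall>m\<ge>1. R (del i f) D m < B" unfolding unb_def by (meson not_le)
        then obtain B where B: "\<forall>i<length f. \<forall>m\<ge>1. R (del i f) D m < B i" by metis
        obtain i m' where im: "i < length f" "m' \<ge> 1" "(\<Sum>i<length f. B i) \<le> R (del i f) D m'"
          using C by blast
        have "B i \<le> (\<Sum>i<length f. B i)" using im(1) by (intro member_le_sum) auto
        moreover have "R (del i f) D m' < B i" using B im by blast
        ultimately show False using im(3) by linarith
      qed
      then obtain i where i: "i < length f" "unb (R (del i f) D)" by blast
      have lt: "length (del i f) < length f" using i by (simp add: del_def)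
      have pos': "\<forall>x\<in>set (del i f). x > 0" using less.prems(1) set_del[of i f] by blast
      obtain f' where f': "2 \<le> length f'" "length f' \<le> length (del i f)"
        "sum_list f' \<le> sum_list (del i f)" "\<forall>x\<in>set f'. x>0" "unb (RDist f' D)"
        using less.IH[OF lt pos' i(2)] by blast
      have "sum_list (del i f) \<le> sum_list f" using sum_list_del[OF i(1)] by linarith
      then show ?thesis using f' lt by (intro exI[of _ f']) auto
    qed
  qed
qed

theorem mainTheorem9:
  fixes h :: nat and D :: "nat set"
  assumes "h \<ge> 2"
    and "\<forall>d\<in>D. d > 0"
    and "\<exists>f. 2 \<le> length f \<and> length f \<le> 2 * h - 1 \<and> (\<forall>x\<in>set f. x > 0) \<and>
           sum_list f \<le> 2 * h \<and> (SUP m\<in>{1..}. enat (R f D m)) = \<infinity>"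
  shows "\<exists>f'. 2 \<le> length f' \<and> length f' \<le> 2 * h - 1 \<and> (\<forall>x\<in>set f'. x > 0) \<and>
           sum_list f' \<le> 2 * h \<and> (SUP m\<in>{1..}. enat (RDist f' D m)) = \<infinity>"
proof -
  obtain f where f: "length f \<le> 2 * h - 1" "\<forall>x\<in>set f. x > 0" "sum_list f \<le> 2 * h"
    "(SUP m\<in>{1..}. enat (R f D m)) = \<infinity>" using assms(3) by blast
  then have "unb (R f D)" using SUP_unb by blast
  then obtain f' where f': "2 \<le> length f'" "length f' \<le> length f" "sum_list f' \<le> sum_list f"
    "\<forall>x\<in>set f'. x>0" "unb (RDist f' D)" using main[OF assms(2) f(2)] by blast
  have "(SUP m\<in>{1..}. enat (RDist f' D m)) = \<infinity>" using f'(5) SUP_unb by blast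
  then show ?thesis using f f' by (intro exI[of _ f']) auto
qed

end
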